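(* Assume $\mathcal G$ is connected. Let $\mathrm y^\star=(\mathrm y^\star_1,\dots,\mathrm y^\star_{|\mathbb V|})\in(\mathbb R^d)^{|\mathbb V|}$ and $\zeta^\star=\mathcal E^T\mathrm y^\star$, and define $A:\mathbb R^d\to\mathbb R\cup\{+\infty\}$ by $A(\beta)=K^\star(\mathrm y^\star+\mathbf 1_{|\mathbb V|}\otimes\beta)=\sum_{i=1}^{|\mathbb V|}K_i^\star(\mathrm y_i^\star+\beta)$. If $\mathbf 0\in\sum_{i=1}^{|\mathbb V|}k_i^{-1}(\mathrm y_i^\star)$ and $A$ is strictly convex on a neighborhood of $\beta=0$, then $\mathrm y^\star$ is the unique minimizer of $K^\star(\mathrm y)$ over the set $\{\mathrm y:\mathcal E^T\mathrm y=\zeta^\star\}$.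
   Context: $\mathcal G=(\mathbb V,\mathbb E)$ is a finite graph with arbitrarily oriented edges and incidence matrix $E$ ($E_{ik}=-1$, $E_{jk}=1$ for edge $k=(i,j)$, other entries of column $k$ zero); $d\ge1$, $\mathcal E=E\otimes I_d$; $\mathbf 1_{|\mathbb V|}$ the all-ones vector. For each $i\in\mathbb V$, $k_i\subseteq\mathbb R^d\times\mathbb R^d$ is a maximal cyclically monotone relation (cyclically monotone: $\sum_{j=1}^N y_j^T(u_j-u_{j-1})\ge0$ for all $N\ge1$, $(u_1,y_1),\dots,(u_N,y_N)\in k_i$, $u_0=u_N$; maximal: not strictly contained in a larger such relation), so $k_i=\partial K_i$ for a closed proper convex $K_i:\mathbb R^d\to\mathbb R\cup\{+\infty\}$; $K_i^\star(y)=\sup_u\{y^Tu-K_i(u)\}$, $K^\star(\mathrm y)=\sum_iK_i^\star(\mathrm y_i)$, $k_i^{-1}(\mathrm y_i)=\{\mathrm u_i:(\mathrm u_i,\mathrm y_i)\in k_i\}$, and the sum of sets is the Minkowski sum. *)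

theory Defs
  imports "HOL-Analysis.Analysis"
begin

definition cyclically_monotone :: "('a::euclidean_space \<times> 'a) set \<Rightarrow> bool" where
  "cyclically_monotone R \<longleftrightarrow>
     (\<forall>N::nat. \<forall>u y :: nat \<Rightarrow> 'a. N \<ge> 1 \<longrightarrow> (\<forall>j\<in>{1..N}. (u j, y j) \<in> R) \<longrightarrow> u 0 = u N \<longrightarrow>
        (\<Sum>j=1..N. y j \<bullet> (u j - u (j - 1))) \<ge> 0)"

definition maximal_cyclically_monotone :: "('a::euclidean_space \<times> 'a) set \<Rightarrow> bool" where
  "maximal_cyclically_monotone R \<longleftrightarrow> cyclically_monotone R \<and>
     (\<forall>R'. cyclically_monotone R' \<and> R \<subseteq> R' \<longrightarrow> R' = R)"

definition epigraph :: "('a \<Rightarrow> ereal) \<Rightarrow> ('a \<times> real) set" where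
  "epigraph K = {(x, r). K x \<le> ereal r}"

definition proper_fun :: "('a \<Rightarrow> ereal) \<Rightarrow> bool" where
  "proper_fun K \<longleftrightarrow> (\<forall>x. K x \<noteq> -\<infinity>) \<and> (\<exists>x. K x \<noteq> \<infinity>)"

definition closed_proper_convex :: "('a::euclidean_space \<Rightarrow> ereal) \<Rightarrow> bool" where
  "closed_proper_convex K \<longleftrightarrow> proper_fun K \<and> convex (epigraph K) \<and> closed (epigraph K)"

definition subdifferential :: "('a::euclidean_space \<Rightarrow> ereal) \<Rightarrow> ('a \<times> 'a) set" where
  "subdifferential K = {(u, y). K u \<noteq> \<infinity> \<and> (\<forall>v. K v \<ge> K u + ereal (y \<bullet> (v - u)))}"

definition conjugate :: "('a::euclidean_space \<Rightarrow> ereal) \<Rightarrow> 'a \<Rightarrow> ereal" where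
  "conjugate K y = (SUP u. ereal (y \<bullet> u) - K u)"

definition minkowski_sum :: "'i set \<Rightarrow> ('i \<Rightarrow> 'a::comm_monoid_add set) \<Rightarrow> 'a set" where
  "minkowski_sum I S = {(\<Sum>i\<in>I. u i) | u. \<forall>i\<in>I. u i \<in> S i}"

definition rel_inv :: "('a \<times> 'b) set \<Rightarrow> 'b \<Rightarrow> 'a set" where
  "rel_inv R y = {u. (u, y) \<in> R}"

definition strictly_convex_on_ereal :: "'a::real_vector set \<Rightarrow> ('a \<Rightarrow> ereal) \<Rightarrow> bool" where
  "strictly_convex_on_ereal S f \<longleftrightarrow>
     (\<forall>x\<in>S. \<forall>y\<in>S. \<forall>t::real. x \<noteq> y \<and> 0 < t \<and> t < 1 \<longrightarrow>
        f ((1 - t) *\<^sub>R x + t *\<^sub>R y) < ereal (1 - t) * f x + ereal t * f y)"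

text \<open>Graph with vertex set V, edge (index) set Ed, each edge e oriented from
  tail e to head e. (E^T \<otimes> I_d) y at edge e = y(head e) - y(tail e).\<close>
definition incidenceT :: "'e set \<Rightarrow> ('e \<Rightarrow> 'v) \<Rightarrow> ('e \<Rightarrow> 'v) \<Rightarrow> ('v \<Rightarrow> 'a::ab_group_add) \<Rightarrow> ('e \<Rightarrow> 'a)" where
  "incidenceT Ed src tgt y = (\<lambda>e. if e \<in> Ed then y (tgt e) - y (src e) else 0)"

definition graph_connected :: "'v set \<Rightarrow> 'e set \<Rightarrow> ('e \<Rightarrow> 'v) \<Rightarrow> ('e \<Rightarrow> 'v) \<Rightarrow> bool" where
  "graph_connected V Ed src tgt \<longleftrightarrow>
     (\<forall>i\<in>V. \<forall>j\<in>V. (i, j) \<in> ({(src e, tgt e) | e. e \<in> Ed} \<union> {(tgt e, src e) | e. e \<in> Ed})\<^sup>*)"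

end

theory Submission
  imports Defs
begin

lemma conj_at_subgrad:
  fixes K :: "'a::euclidean_space \<Rightarrow> ereal"
  assumes "(u,y) \<in> subdifferential K" "K u \<noteq> -\<infinity>"
  shows "\<exists>r. K u = ereal r \<and> conjugate K y = ereal (y \<bullet> u - r)
            \<and> (\<forall>b. conjugate K b \<ge> ereal (b \<bullet> u - r))"
proof -
  from assms(1) have fin: "K u \<noteq> \<infinity>" and sg: "\<forall>v. K v \<ge> K u + ereal (y \<bullet> (v - u))"
    unfolding subdifferential_def by auto
  then obtain r where r: "K u = ereal r" using assms(2) by (cases "K u") auto
  have lb: "conjugate K b \<ge> ereal (b \<bullet> u - r)" for b
  proof -
    have "ereal (b \<bullet> u) - K u \<le> conjugate K b"
      unfolding conjugate_def by (rule SUP_upper) auto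
    thus ?thesis using r by simp
  qed
  have "conjugate K y \<le> ereal (y \<bullet> u - r)"
    unfolding conjugate_def
  proof (rule SUP_least)
    fix v
    show "ereal (y \<bullet> v) - K v \<le> ereal (y \<bullet> u - r)"
    proof (cases "K v")
      case (real s)
      have "ereal s \<ge> ereal r + ereal (y \<bullet> (v - u))" using sg r real by metis
      hence "s \<ge> r + y \<bullet> (v - u)" by simp
      thus ?thesis using real by (simp add: inner_diff_right)
    next
      case PInf thus ?thesis by simp
    next
      case MInf
      have "K v \<ge> ereal r + ereal (y \<bullet> (v - u))" using sg r by metis
      thus ?thesis using MInf by simp
    qed
  qed
  with lb[of y] have "conjugate K y = ereal (y \<bullet> u - r)" by (simp add: antisym)
  with r lb show ?thesis by blast
qed

lemma conj_convex:
  fixes K :: "'a::euclidean_space \<Rightarrow> ereal"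
  assumes "conjugate K a = ereal p" "conjugate K b = ereal q"
    "\<forall>x. K x \<noteq> -\<infinity>" "0 \<le> t" "t \<le> 1"
  shows "conjugate K ((1-t) *\<^sub>R a + t *\<^sub>R b) \<le> ereal ((1-t)*p + t*q)"
  unfolding conjugate_def
proof (rule SUP_least)
  fix u
  show "ereal (((1-t) *\<^sub>R a + t *\<^sub>R b) \<bullet> u) - K u \<le> ereal ((1-t)*p + t*q)"
  proof (cases "K u")
    case (real r)
    have "ereal (a \<bullet> u) - K u \<le> conjugate K a"
      unfolding conjugate_def by (rule SUP_upper) auto
    hence 1: "a \<bullet> u - r \<le> p" using assms(1) real by simp
    have "ereal (b \<bullet> u) - K u \<le> conjugate K b"
      unfolding conjugate_def by (rule SUP_upper) auto
    hence 2: "b \<bullet> u - r \<le> q" using assms(2) real by simp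
    have "((1-t) *\<^sub>R a + t *\<^sub>R b) \<bullet> u - r = (1-t)*(a \<bullet> u - r) + t*(b \<bullet> u - r)"
      by (simp add: inner_add_left algebra_simps)
    also have "\<dots> \<le> (1-t)*p + t*q"
      using 1 2 assms(4,5) by (intro add_mono mult_left_mono) auto
    finally show ?thesis using real by simp
  next
    case PInf thus ?thesis by simp
  next
    case MInf thus ?thesis using assms(3) by auto
  qed
qed

theorem mainTheorem9:
  fixes V :: "'v set" and Ed :: "'e set" and src tgt :: "'e \<Rightarrow> 'v"
    and k :: "'v \<Rightarrow> ('a::euclidean_space \<times> 'a) set"
    and K :: "'v \<Rightarrow> 'a \<Rightarrow> ereal"
    and ystar :: "'v \<Rightarrow> 'a"
  assumes finV: "finite V" and finE: "finite Ed"
    and edges: "\<forall>e\<in>Ed. src e \<in> V \<and> tgt e \<in> V"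
    and conn: "graph_connected V Ed src tgt"
    and kmax: "\<forall>i\<in>V. maximal_cyclically_monotone (k i)"
    and Kcpc: "\<forall>i\<in>V. closed_proper_convex (K i)"
    and kK: "\<forall>i\<in>V. k i = subdifferential (K i)"
    and zero_in: "0 \<in> minkowski_sum V (\<lambda>i. rel_inv (k i) (ystar i))"
    and strict: "\<exists>\<epsilon>>0. strictly_convex_on_ereal (ball 0 \<epsilon>)
                   (\<lambda>\<beta>. \<Sum>i\<in>V. conjugate (K i) (ystar i + \<beta>))"
  shows "(\<forall>y. incidenceT Ed src tgt y = incidenceT Ed src tgt ystar \<longrightarrow>
             (\<Sum>i\<in>V. conjugate (K i) (ystar i)) \<le> (\<Sum>i\<in>V. conjugate (K i) (y i)))
       \<and> (\<forall>y. incidenceT Ed src tgt y = incidenceT Ed src tgt ystar \<and>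
             (\<forall>z. incidenceT Ed src tgt z = incidenceT Ed src tgt ystar \<longrightarrow>
                 (\<Sum>i\<in>V. conjugate (K i) (y i)) \<le> (\<Sum>i\<in>V. conjugate (K i) (z i)))
             \<longrightarrow> (\<forall>i\<in>V. y i = ystar i))"
proof -
  define A where "A = (\<lambda>\<beta>. \<Sum>i\<in>V. conjugate (K i) (ystar i + \<beta>))"
  have notm: "\<forall>x. K i x \<noteq> -\<infinity>" if "i \<in> V" for i
    using Kcpc that unfolding closed_proper_convex_def proper_fun_def by auto
  obtain u where u: "\<forall>i\<in>V. (u i, ystar i) \<in> k i" and usum: "(\<Sum>i\<in>V. u i) = 0"
    using zero_in unfolding minkowski_sum_def rel_inv_def by auto
  have "\<forall>i\<in>V. \<exists>r. K i (u i) = ereal r \<and> conjugate (K i) (ystar i) = ereal (ystar i \<bullet> u i - r)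
            \<and> (\<forall>b. conjugate (K i) b \<ge> ereal (b \<bullet> u i - r))"
    using u kK notm conj_at_subgrad by metis
  then obtain r where r: "\<And>i. i \<in> V \<Longrightarrow> conjugate (K i) (ystar i) = ereal (ystar i \<bullet> u i - r i)
            \<and> (\<forall>b. conjugate (K i) b \<ge> ereal (b \<bullet> u i - r i))"
    by metis
  define C where "C = (\<Sum>i\<in>V. ystar i \<bullet> u i - r i)"
  have A0: "A 0 = ereal C" unfolding A_def C_def using r by simp
  have lower: "ereal C \<le> A \<beta>" for \<beta>
  proof -
    have "A \<beta> \<ge> (\<Sum>i\<in>V. ereal ((ystar i + \<beta>) \<bullet> u i - r i))"
      unfolding A_def using r by (intro sum_mono) auto
    moreover have "(\<Sum>i\<in>V. (ystar i + \<beta>) \<bullet> u i - r i) = C + \<beta> \<bullet> (\<Sum>i\<in>V. u i)"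
      unfolding C_def by (simp add: inner_add_left sum.distrib sum_subtractf inner_sum_right)
    ultimately show ?thesis using usum by simp
  qed
  have lowerb: "ereal ((ystar i + \<beta>) \<bullet> u i - r i) \<le> conjugate (K i) (ystar i + \<beta>)"
    if "i \<in> V" for i \<beta> using r that by auto
  have shift: "\<exists>\<beta>. \<forall>i\<in>V. y i = ystar i + \<beta>"
    if h: "incidenceT Ed src tgt y = incidenceT Ed src tgt ystar" for y
  proof (cases "V = {}")
    case True thus ?thesis by auto
  next
    case False
    then obtain i0 where i0: "i0 \<in> V" by auto
    define d where "d = (\<lambda>i. y i - ystar i)"
    have de: "d (tgt e) = d (src e)" if "e \<in> Ed" for e
    proof -
      have "incidenceT Ed src tgt y e = incidenceT Ed src tgt ystar e" using h by simp
      thus ?thesis using that unfolding incidenceT_def d_def by (simp add: algebra_simps)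
    qed
    have "d j = d i0" if "(i0, j) \<in> ({(src e, tgt e) | e. e \<in> Ed} \<union> {(tgt e, src e) | e. e \<in> Ed})\<^sup>*" for j
      using that
    proof (induction rule: rtrancl_induct)
      case base thus ?case by simp
    next
      case (step a b) thus ?case using de by auto
    qed
    hence "\<forall>i\<in>V. d i = d i0" using conn i0 unfolding graph_connected_def by blast
    thus ?thesis unfolding d_def by (intro exI[of _ "d i0"]) (auto simp: d_def algebra_simps)
  qed
  have P1: "\<forall>y. incidenceT Ed src tgt y = incidenceT Ed src tgt ystar \<longrightarrow>
             (\<Sum>i\<in>V. conjugate (K i) (ystar i)) \<le> (\<Sum>i\<in>V. conjugate (K i) (y i))"
  proof (intro allI impI)
    fix y assume "incidenceT Ed src tgt y = incidenceT Ed src tgt ystar"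
    then obtain \<beta> where b: "\<forall>i\<in>V. y i = ystar i + \<beta>" using shift by blast
    have "(\<Sum>i\<in>V. conjugate (K i) (y i)) = A \<beta>" unfolding A_def using b by simp
    moreover have "(\<Sum>i\<in>V. conjugate (K i) (ystar i)) = A 0" unfolding A_def by simp
    ultimately show "(\<Sum>i\<in>V. conjugate (K i) (ystar i)) \<le> (\<Sum>i\<in>V. conjugate (K i) (y i))"
      using A0 lower by simp
  qed
  have P2: "\<forall>i\<in>V. y i = ystar i"
    if hy: "incidenceT Ed src tgt y = incidenceT Ed src tgt ystar"
      and mn: "\<forall>z. incidenceT Ed src tgt z = incidenceT Ed src tgt ystar \<longrightarrow>
                 (\<Sum>i\<in>V. conjugate (K i) (y i)) \<le> (\<Sum>i\<in>V. conjugate (K i) (z i))" for y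
  proof -
    obtain \<beta> where b: "\<forall>i\<in>V. y i = ystar i + \<beta>" using shift hy by blast
    have Ay: "(\<Sum>i\<in>V. conjugate (K i) (y i)) = A \<beta>" unfolding A_def using b by simp
    have "A \<beta> \<le> A 0" using mn[rule_format, of ystar] Ay unfolding A_def by simp
    hence Ab: "A \<beta> = ereal C" using lower[of \<beta>] A0 by simp
    show ?thesis
    proof (rule ccontr)
      assume "\<not> ?thesis"
      hence bne: "\<beta> \<noteq> 0" using b by auto
      obtain \<epsilon> where ep: "\<epsilon> > 0" and sc: "strictly_convex_on_ereal (ball 0 \<epsilon>) A"
        using strict unfolding A_def by blast
      have nfin: "conjugate (K i) (ystar i + \<beta>) \<noteq> \<infinity>" if "i \<in> V" for i
      proof
        assume "conjugate (K i) (ystar i + \<beta>) = \<infinity>"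
        hence "A \<beta> = \<infinity>" using that finV unfolding A_def sum_Pinfty by blast
        thus False using Ab by simp
      qed
      define q where "q i = real_of_ereal (conjugate (K i) (ystar i + \<beta>))" for i
      have qe: "conjugate (K i) (ystar i + \<beta>) = ereal (q i)" if "i \<in> V" for i
      proof -
        have "conjugate (K i) (ystar i + \<beta>) \<noteq> -\<infinity>" using lowerb[OF that, of \<beta>] by auto
        thus ?thesis using nfin[OF that] unfolding q_def by (cases "conjugate (K i) (ystar i + \<beta>)") auto
      qed
      have "ereal (\<Sum>i\<in>V. q i) = ereal C" using Ab qe unfolding A_def by simp
      hence qs: "(\<Sum>i\<in>V. q i) = C" by simp
      define t where "t = min 1 (\<epsilon> / (2 * norm \<beta>))"
      have nb: "norm \<beta> > 0" using bne by simp
      have t0: "t > 0" using ep nb unfolding t_def by simp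
      have t1: "t \<le> 1" unfolding t_def by simp
      have "norm (t *\<^sub>R \<beta>) = t * norm \<beta>" using t0 by simp
      also have "\<dots> \<le> \<epsilon> / (2 * norm \<beta>) * norm \<beta>"
        using nb unfolding t_def by (intro mult_right_mono) auto
      also have "\<dots> = \<epsilon> / 2" using nb by simp
      finally have wb: "t *\<^sub>R \<beta> \<in> ball 0 \<epsilon>" using ep by simp
      have "A (t *\<^sub>R \<beta>) \<le> (\<Sum>i\<in>V. ereal ((1-t) * (ystar i \<bullet> u i - r i) + t * q i))"
        unfolding A_def
      proof (rule sum_mono)
        fix i assume i: "i \<in> V"
        have "conjugate (K i) ((1-t) *\<^sub>R ystar i + t *\<^sub>R (ystar i + \<beta>))
              \<le> ereal ((1-t) * (ystar i \<bullet> u i - r i) + t * q i)"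
          using conj_convex[OF _ qe[OF i] notm[OF i], of "ystar i"] r[OF i] t0 t1 by auto
        moreover have "(1-t) *\<^sub>R ystar i + t *\<^sub>R (ystar i + \<beta>) = ystar i + t *\<^sub>R \<beta>"
          by (simp add: algebra_simps)
        ultimately show "conjugate (K i) (ystar i + t *\<^sub>R \<beta>) \<le> ereal ((1-t) * (ystar i \<bullet> u i - r i) + t * q i)"
          by simp
      qed
      also have "\<dots> = ereal ((1-t) * C + t * C)"
        using qs unfolding C_def by (simp add: sum.distrib sum_distrib_left[symmetric])
      also have "\<dots> = ereal C" by (simp add: algebra_simps)
      finally have Aw: "A (t *\<^sub>R \<beta>) = ereal C" using lower[of "t *\<^sub>R \<beta>"] by simp
      have wne: "0 \<noteq> t *\<^sub>R \<beta>" using t0 bne by simp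
      have "A ((1 - 1/2) *\<^sub>R 0 + (1/2) *\<^sub>R (t *\<^sub>R \<beta>)) < ereal (1 - 1/2) * A 0 + ereal (1/2) * A (t *\<^sub>R \<beta>)"
        using sc wb ep wne unfolding strictly_convex_on_ereal_def 
        by (intro sc[unfolded strictly_convex_on_ereal_def, rule_format]) auto
      also have "\<dots> = ereal C" using A0 Aw by simp
      finally show False using lower[of "(1 - 1/2) *\<^sub>R 0 + (1/2) *\<^sub>R (t *\<^sub>R \<beta>)"] by simp
    qed
  qed
  show ?thesis using P1 P2 by blast
qed

end
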